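(* Let $m\ge2$ and $H\le G$, and let $W$ be an $R_mH$-module that is a direct sum of cyclic $R_mH$-submodules $W_k$, each of which is a free $R_m(H/S_k)$-module for some subgroup $S_k\le H$ (acting trivially on $W_k$). Then $W$ does not have property $\mathcal P(H)$.
   Context: $p$ is a prime, $G$ a cyclic group of order $p^n$, $R_m=\mathbb Z/p^m\mathbb Z$. Let $H\le G$ with generator $\tau$. For $m\ge2$, an $R_mH$-module $W$ has property $\mathcal P(H)$ if there exist an integer $s\ge0$ and elements $y,z\in W\setminus\big((\tau^{p^s}-1)W+pW\big)$ such that $(\tau^{p^s}-1)y=p^{m-1}z$. *)

theory Defs
  imports "HOL-Computational_Algebra.Primes"
begin

definition zsmult :: "int \<Rightarrow> 'a::ab_group_add \<Rightarrow> 'a" where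
  "zsmult k x = (if 0 \<le> k then (\<Sum>_<nat k. x) else - (\<Sum>_<nat (- k). x))"

text \<open>An R_m H-module, H cyclic of order p^h generated by tau: the whole type 'a
  with the additive action T of tau, T^(p^h) = id, and p^m W = 0.\<close>
definition RmH_module :: "nat \<Rightarrow> nat \<Rightarrow> nat \<Rightarrow> ('a::ab_group_add \<Rightarrow> 'a) \<Rightarrow> bool" where
  "RmH_module p m h T \<longleftrightarrow>
     (\<forall>x y. T (x + y) = T x + T y) \<and> (T ^^ (p ^ h) = id) \<and>
     (\<forall>x. zsmult (int p ^ m) (x::'a) = 0)"

definition cyclic_submodule :: "('a::ab_group_add \<Rightarrow> 'a) \<Rightarrow> 'a \<Rightarrow> 'a set" where
  "cyclic_submodule T w0 =
     {\<Sum>i<M. zsmult (c i) ((T ^^ i) w0) | c M. True}"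

text \<open>V (a subset of W) is a free R_m(H/S)-module where S = <tau^(p^s)> acts trivially on V,
  so that H/S is cyclic of order p^s generated by the image of tau.\<close>
definition free_quotient_module ::
  "nat \<Rightarrow> nat \<Rightarrow> nat \<Rightarrow> ('a::ab_group_add \<Rightarrow> 'a) \<Rightarrow> 'a set \<Rightarrow> bool" where
  "free_quotient_module p m s T V \<longleftrightarrow>
     (\<forall>w\<in>V. (T ^^ (p ^ s)) w = w) \<and>
     (\<exists>B \<subseteq> V.
        V = {\<Sum>b\<in>B0. \<Sum>i<p ^ s. zsmult (c b i) ((T ^^ i) b) | B0 c. finite B0 \<and> B0 \<subseteq> B} \<and>
        (\<forall>B0 c. finite B0 \<and> B0 \<subseteq> B \<and>
            (\<Sum>b\<in>B0. \<Sum>i<p ^ s. zsmult (c b i) ((T ^^ i) b)) = 0 \<longrightarrow>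
            (\<forall>b\<in>B0. \<forall>i<p ^ s. (int p ^ m) dvd c b i)))"

definition internal_direct_sum :: "('k \<Rightarrow> 'a::ab_group_add set) \<Rightarrow> bool" where
  "internal_direct_sum Wk \<longleftrightarrow>
     (\<forall>w. \<exists>f. finite {k. f k \<noteq> 0} \<and> (\<forall>k. f k \<in> Wk k) \<and> w = sum f {k. f k \<noteq> 0}) \<and>
     (\<forall>f. finite {k. f k \<noteq> 0} \<and> (\<forall>k. f k \<in> Wk k) \<and> sum f {k. f k \<noteq> 0} = 0
          \<longrightarrow> (\<forall>k. f k = 0))"

definition propP :: "nat \<Rightarrow> nat \<Rightarrow> ('a::ab_group_add \<Rightarrow> 'a) \<Rightarrow> bool" where
  "propP p m T \<longleftrightarrow>
     (\<exists>s y z.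
        let D = {(T ^^ (p ^ s)) a - a + zsmult (int p) b | a b. True} in
        y \<notin> D \<and> z \<notin> D \<and> (T ^^ (p ^ s)) y - y = zsmult (int p ^ (m - 1)) z)"

end

theory Submission
  imports Defs
begin

lemma zsmult_0_left[simp]: "zsmult 0 x = 0"
  by (simp add: zsmult_def)

lemma zsmult_plus1: "zsmult (k + 1) x = zsmult k x + x"
proof (cases "k \<ge> 0")
  case True
  then have "nat (k+1) = Suc (nat k)" by simp
  then show ?thesis using True by (simp add: zsmult_def)
next
  case False
  show ?thesis
  proof (cases "k = -1")
    case True then show ?thesis by (simp add: zsmult_def)
  next
    case False2: False
    have "nat (-k) = Suc (nat (-(k+1)))" using False False2 by simp
    then show ?thesis using False False2 by (simp add: zsmult_def)
  qed
qed

lemma zsmult_minus1: "zsmult (k - 1) x = zsmult k x - x"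
  using zsmult_plus1[of "k-1" x] by simp

lemma zsmult_plus1': "zsmult (1 + k) x = x + zsmult k x"
  using zsmult_plus1[of k x] by (simp add: add.commute)

lemma zsmult_add_left: "zsmult (a + b) x = zsmult a x + zsmult b x"
proof (induction b rule: int_induct[where k=0])
  case base then show ?case by simp
next
  case (step1 i) then show ?case
    by (metis (no_types, lifting) add.assoc zsmult_plus1)
next
  case (step2 i)
  have "zsmult (a + (i - 1)) x = zsmult (a+i) x - x"
    by (metis add_diff_eq zsmult_minus1)
  also have "\<dots> = zsmult a x + (zsmult i x - x)" using step2 by (simp add: algebra_simps)
  also have "\<dots> = zsmult a x + zsmult (i - 1) x" by (simp add: zsmult_minus1)
  finally show ?case .
qed

lemma zsmult_1[simp]: "zsmult 1 x = x"
  using zsmult_plus1[of 0 x] by simp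

lemma zsmult_minus_left: "zsmult (- a) x = - zsmult a x"
proof -
  have "zsmult a x + zsmult (-a) x = 0" using zsmult_add_left[of a "-a" x] by simp
  then show ?thesis by (metis add_diff_cancel_left' diff_0)
qed

lemma zsmult_diff_left: "zsmult (a - b) x = zsmult a x - zsmult b x"
  using zsmult_add_left[of a "-b" x] zsmult_minus_left[of b x] by simp

lemma zsmult_add_right: "zsmult k (x + y) = zsmult k x + zsmult k y"
proof (induction k rule: int_induct[where k=0])
  case base then show ?case by simp
next
  case (step1 i) then show ?case by (simp add: zsmult_plus1' algebra_simps)
next
  case (step2 i) then show ?case by (simp add: zsmult_minus1 algebra_simps)
qed

lemma zsmult_0_right[simp]: "zsmult k (0::'a::ab_group_add) = 0"
  using zsmult_add_right[of k "0::'a" 0] by simp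

lemma zsmult_minus_right: "zsmult k (- x) = - zsmult k x"
proof -
  have "zsmult k x + zsmult k (-x) = 0" using zsmult_add_right[of k x "-x"] by simp
  then show ?thesis by (metis add_diff_cancel_left' diff_0)
qed

lemma zsmult_diff_right: "zsmult k (x - y) = zsmult k x - zsmult k y"
  using zsmult_add_right[of k x "-y"] zsmult_minus_right[of k y] by simp

lemma zsmult_mult: "zsmult (a * b) x = zsmult a (zsmult b x)"
proof (induction a rule: int_induct[where k=0])
  case base then show ?case by simp
next
  case (step1 i) then show ?case by (simp add: zsmult_plus1 zsmult_add_left distrib_right)
next
  case (step2 i) then show ?case by (simp add: zsmult_minus1 zsmult_diff_left left_diff_distrib)
qed

lemma zsmult_sum_right: "zsmult k (sum f A) = (\<Sum>i\<in>A. zsmult k (f i))"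
  by (induction A rule: infinite_finite_induct) (auto simp: zsmult_add_right)

lemma zsmult_sum_left: "zsmult (sum c A) x = (\<Sum>i\<in>A. zsmult (c i) x)"
  by (induction A rule: infinite_finite_induct) (auto simp: zsmult_add_left)

definition addh :: "('a::ab_group_add \<Rightarrow> 'a) \<Rightarrow> bool" where
  "addh f \<longleftrightarrow> (\<forall>x y. f (x + y) = f x + f y)"

lemma addh_0: "addh f \<Longrightarrow> f 0 = 0"
  unfolding addh_def by (metis add_cancel_right_right add_0)

lemma addh_add: "addh f \<Longrightarrow> f (x + y) = f x + f y"
  unfolding addh_def by blast

lemma addh_minus: "addh f \<Longrightarrow> f (- x) = - f x"
  by (metis addh_0 addh_add add.right_inverse eq_neg_iff_add_eq_0)

lemma addh_diff: "addh f \<Longrightarrow> f (x - y) = f x - f y"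
  by (metis addh_add addh_minus diff_conv_add_uminus)

lemma addh_zsmult: "addh f \<Longrightarrow> f (zsmult k x) = zsmult k (f x)"
proof (induction k rule: int_induct[where k=0])
  case base then show ?case by (simp add: addh_0)
next
  case (step1 i) then show ?case by (simp add: zsmult_plus1 addh_add)
next
  case (step2 i) then show ?case by (simp add: zsmult_minus1 addh_diff)
qed

lemma addh_sum: "addh f \<Longrightarrow> f (sum g A) = (\<Sum>i\<in>A. f (g i))"
  by (induction A rule: infinite_finite_induct) (auto simp: addh_0 addh_add)

lemma addh_funpow: "addh f \<Longrightarrow> addh (f ^^ n)"
  by (induction n) (auto simp: addh_def)


definition Dset :: "('a::ab_group_add \<Rightarrow> 'a) \<Rightarrow> nat \<Rightarrow> nat \<Rightarrow> 'a set" where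
  "Dset T p s = {(T ^^ (p ^ s)) a - a + zsmult (int p) b | a b. True}"

lemma D_0: "addh T \<Longrightarrow> 0 \<in> Dset T p s"
  unfolding Dset_def by (rule CollectI, rule exI[of _ 0], rule exI[of _ 0])
    (simp add: addh_0 addh_funpow)

lemma D_add: assumes "addh T" "x \<in> Dset T p s" "y \<in> Dset T p s"
  shows "x + y \<in> Dset T p s"
proof -
  from assms(2) obtain a b where x: "x = (T ^^ (p ^ s)) a - a + zsmult (int p) b"
    unfolding Dset_def by blast
  from assms(3) obtain a' b' where y: "y = (T ^^ (p ^ s)) a' - a' + zsmult (int p) b'"
    unfolding Dset_def by blast
  have "x + y = (T ^^ (p ^ s)) (a + a') - (a + a') + zsmult (int p) (b + b')"
    unfolding x y using addh_add[OF addh_funpow[OF assms(1)], of "p^s" a a']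
    by (simp add: zsmult_add_right algebra_simps)
  then show ?thesis unfolding Dset_def by blast
qed

lemma D_zsmult: assumes "addh T" "x \<in> Dset T p s"
  shows "zsmult k x \<in> Dset T p s"
proof -
  from assms(2) obtain a b where x: "x = (T ^^ (p ^ s)) a - a + zsmult (int p) b"
    unfolding Dset_def by blast
  have "zsmult k x = (T ^^ (p ^ s)) (zsmult k a) - zsmult k a + zsmult (int p) (zsmult k b)"
    unfolding x using addh_funpow[OF assms(1)]
    by (simp add: addh_zsmult zsmult_add_right zsmult_diff_right flip: zsmult_mult) (simp add: mult.commute)
  then show ?thesis unfolding Dset_def by blast
qed

lemma D_sum: assumes "addh T" "\<And>i. i \<in> A \<Longrightarrow> f i \<in> Dset T p s"
  shows "sum f A \<in> Dset T p s"
  using assms(2)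
  by (induction A rule: infinite_finite_induct) (auto simp: D_0[OF assms(1)] D_add[OF assms(1)])

lemma D_p: "addh T \<Longrightarrow> zsmult (int p) w \<in> Dset T p s"
  unfolding Dset_def by (rule CollectI, rule exI[of _ 0], rule exI[of _ w]) (simp add: addh_0 addh_funpow)

lemma D_sig: "(T ^^ (p ^ s)) w - w \<in> Dset T p s"
  unfolding Dset_def by (rule CollectI, rule exI[of _ w], rule exI[of _ 0]) simp

lemma funpow_period:
  assumes "(T ^^ P) b = b"
  shows "(T ^^ (P * k)) b = b"
proof (induction k)
  case 0 then show ?case by simp
next
  case (Suc k)
  have "(T ^^ (P * Suc k)) b = (T ^^ P) ((T ^^ (P * k)) b)"
    by (simp add: funpow_add)
  then show ?case using Suc assms by simp
qed

lemma funpow_mod_period: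
  assumes "(T ^^ P) b = b"
  shows "(T ^^ n) b = (T ^^ (n mod P)) b"
proof -
  have "(T ^^ n) b = (T ^^ (n mod P + P * (n div P))) b" by simp
  also have "\<dots> = (T ^^ (n mod P)) ((T ^^ (P * (n div P))) b)"
    by (simp only: funpow_add o_apply)
  also have "\<dots> = (T ^^ (n mod P)) b" using funpow_period[OF assms] by simp
  finally show ?thesis .
qed


lemma component:
  fixes T :: "'a::ab_group_add \<Rightarrow> 'a"
  assumes hT: "addh T" and p: "p > 1" and m: "m \<ge> 1"
    and fq: "free_quotient_module p m t T V"
    and yV: "y \<in> V" and zV: "z \<in> V"
    and eq: "(T ^^ (p ^ s)) y - y = zsmult (int p ^ (m - 1)) z"
  shows "z \<in> Dset T p s"
proof -
  define P where "P = p ^ t"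
  define g where "g = p ^ (min s t)"
  define q where "q = p ^ s mod P"
  have P0: "P > 0" using p by (simp add: P_def)
  have g0: "g > 0" using p by (simp add: g_def)
  have gP: "g dvd P" by (simp add: g_def P_def le_imp_power_dvd)
  have gps: "g dvd p ^ s" by (simp add: g_def le_imp_power_dvd)
  have gq: "g dvd q" unfolding q_def using gP gps dvd_mod by blast
  have qP: "q < P" using P0 by (simp add: q_def)
  have hTn: "\<And>n. addh (T ^^ n)" using addh_funpow hT by blast
  from fq obtain B where BV: "B \<subseteq> V"
    and Vrep: "V = {\<Sum>b\<in>B0. \<Sum>i<P. zsmult (c b i) ((T ^^ i) b) | B0 c. finite B0 \<and> B0 \<subseteq> B}"
    and indep: "\<forall>B0 c. finite B0 \<and> B0 \<subseteq> B \<and>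
            (\<Sum>b\<in>B0. \<Sum>i<P. zsmult (c b i) ((T ^^ i) b)) = 0 \<longrightarrow>
            (\<forall>b\<in>B0. \<forall>i<P. (int p ^ m) dvd c b i)"
    and fixV: "\<forall>w\<in>V. (T ^^ P) w = w"
    unfolding free_quotient_module_def P_def by blast
  have perB: "(T ^^ n) b = (T ^^ (n mod P)) b" if "b \<in> B" for b n
    using funpow_mod_period[where T=T and P=P and b=b and n=n] fixV BV that by blast
  have perB2: "(T ^^ P) ((T ^^ n) b) = (T ^^ n) b" if "b \<in> B" for b n
  proof -
    have "(T ^^ P) ((T ^^ n) b) = (T ^^ (P + n)) b" by (simp add: funpow_add)
    also have "\<dots> = (T ^^ n) b" using perB[OF that, of "P+n"] perB[OF that, of n] by simp
    finally show ?thesis .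
  qed
  have Dg: "(T ^^ g) ((T ^^ n) b) - (T ^^ n) b \<in> Dset T p s" if "b \<in> B" for b n
  proof (cases "s \<le> t")
    case True
    then have "g = p ^ s" by (simp add: g_def)
    then show ?thesis using D_sig by metis
  next
    case False
    then have "g = P" by (simp add: g_def P_def)
    then show ?thesis using perB2[OF that] D_0[OF hT] by simp
  qed
  have Dj: "(T ^^ (g * j + r)) b - (T ^^ r) b \<in> Dset T p s" if "b \<in> B" for b j r
  proof (induction j)
    case 0 then show ?case using D_0[OF hT] by simp
  next
    case (Suc j)
    have "(T ^^ (g * Suc j + r)) b = (T ^^ g) ((T ^^ (g * j + r)) b)"
      by (simp add: funpow_add add.assoc)
    then have "(T ^^ (g * Suc j + r)) b - (T ^^ r) b =
       ((T ^^ g) ((T ^^ (g * j + r)) b) - (T ^^ (g * j + r)) b) + ((T ^^ (g * j + r)) b - (T ^^ r) b)"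
      by simp
    then show ?case using D_add[OF hT Dg[OF that, of "g * j + r"] Suc] by simp
  qed
  have Dmod: "(T ^^ i) b - (T ^^ (i mod g)) b \<in> Dset T p s" if "b \<in> B" for b i
    using Dj[OF that, of "i div g" "i mod g"] by simp
  from zV obtain B0 c where B0: "finite B0" "B0 \<subseteq> B"
    and zrep: "z = (\<Sum>b\<in>B0. \<Sum>i<P. zsmult (c b i) ((T ^^ i) b))"
    unfolding Vrep by blast
  from yV obtain B1 d where B1: "finite B1" "B1 \<subseteq> B"
    and yrep: "y = (\<Sum>b\<in>B1. \<Sum>i<P. zsmult (d b i) ((T ^^ i) b))"
    unfolding Vrep by blast
  define K where "K r = {i \<in> {..<P}. i mod g = r}" for r
  define pi where "pi i = (i + q) mod P" for i
  define rho where "rho j = (j + (P - q)) mod P" for j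
  have rp: "rho (pi i) = i" if "i < P" for i
  proof -
    have "rho (pi i) = (i + q + (P - q)) mod P" unfolding rho_def pi_def by (simp add: mod_add_left_eq)
    also have "i + q + (P - q) = i + P" using qP by simp
    finally show ?thesis using that by simp
  qed
  have pr: "pi (rho j) = j" if "j < P" for j
  proof -
    have "pi (rho j) = (j + (P - q) + q) mod P" unfolding rho_def pi_def by (simp add: mod_add_left_eq)
    also have "j + (P - q) + q = j + P" using qP by simp
    finally show ?thesis using that by simp
  qed
  have piP: "pi i < P" for i using P0 by (simp add: pi_def)
  have rhoP: "rho i < P" for i using P0 by (simp add: rho_def)
  have bij1: "bij_betw pi {..<P} {..<P}"
    by (rule bij_betw_byWitness[where f'=rho]) (auto simp: rp pr piP rhoP)
  have gPq: "g dvd P - q" using gP gq by (simp add: dvd_diff_nat)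
  have rhoK: "rho j mod g = j mod g" for j
  proof -
    obtain l where l: "P - q = g * l" using gPq by blast
    have "rho j mod g = (j + (P - q)) mod g" unfolding rho_def using gP by (simp add: mod_mod_cancel)
    also have "\<dots> = j mod g" using l by simp
    finally show ?thesis .
  qed
  have piK: "pi j mod g = j mod g" for j
  proof -
    obtain l where l: "q = g * l" using gq by blast
    have "pi j mod g = (j + q) mod g" unfolding pi_def using gP by (simp add: mod_mod_cancel)
    also have "\<dots> = j mod g" using l by simp
    finally show ?thesis .
  qed
  have bijK: "bij_betw rho (K r) (K r)" for r
    by (rule bij_betw_byWitness[where f'=pi]) (auto simp: K_def rp pr rhoK piK piP rhoP)
  define B2 where "B2 = B0 \<union> B1"
  define c' where "c' b i = (if b \<in> B0 then c b i else 0)" for b i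
  define d' where "d' b i = (if b \<in> B1 then d b i else 0)" for b i
  have fB2: "finite B2" "B2 \<subseteq> B" using B0 B1 by (auto simp: B2_def)
  have z2: "z = (\<Sum>b\<in>B2. \<Sum>i<P. zsmult (c' b i) ((T ^^ i) b))"
    unfolding zrep by (rule sum.mono_neutral_cong_left) (auto simp: c'_def B2_def B0 B1)
  have y2: "y = (\<Sum>b\<in>B2. \<Sum>i<P. zsmult (d' b i) ((T ^^ i) b))"
    unfolding yrep by (rule sum.mono_neutral_cong_left) (auto simp: d'_def B2_def B0 B1)
  have sigterm: "(T ^^ (p ^ s)) ((T ^^ i) b) = (T ^^ pi i) b" if "b \<in> B" for b i
  proof -
    have "(T ^^ (p ^ s)) ((T ^^ i) b) = (T ^^ (p ^ s + i)) b" by (simp only: funpow_add o_apply)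
    also have "\<dots> = (T ^^ (i + p ^ s)) b" by (simp add: add.commute)
    also have "\<dots> = (T ^^ ((i + p ^ s) mod P)) b" using perB[OF that] by blast
    also have "(i + p ^ s) mod P = pi i" unfolding pi_def q_def by (simp add: mod_add_right_eq)
    finally show ?thesis .
  qed
  have sy: "(T ^^ (p ^ s)) y = (\<Sum>b\<in>B2. \<Sum>j<P. zsmult (d' b (rho j)) ((T ^^ j) b))"
  proof -
    have "(T ^^ (p ^ s)) y = (\<Sum>b\<in>B2. \<Sum>i<P. zsmult (d' b i) ((T ^^ (p ^ s)) ((T ^^ i) b)))"
      unfolding y2 by (simp add: addh_sum[OF hTn] addh_zsmult[OF hTn])
    also have "\<dots> = (\<Sum>b\<in>B2. \<Sum>i<P. zsmult (d' b i) ((T ^^ pi i) b))"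
      using fB2 by (intro sum.cong refl) (auto simp: sigterm)
    also have "\<dots> = (\<Sum>b\<in>B2. \<Sum>j<P. zsmult (d' b (rho j)) ((T ^^ j) b))"
    proof (rule sum.cong[OF refl])
      fix b assume "b \<in> B2"
      have "(\<Sum>i<P. zsmult (d' b i) ((T ^^ pi i) b)) = (\<Sum>i<P. zsmult (d' b (rho (pi i))) ((T ^^ pi i) b))"
        by (rule sum.cong) (auto simp: rp)
      also have "(\<Sum>i<P. zsmult (d' b (rho (pi i))) ((T ^^ pi i) b)) = (\<Sum>j<P. zsmult (d' b (rho j)) ((T ^^ j) b))"
        by (rule sum.reindex_bij_betw[OF bij1, of "\<lambda>j. zsmult (d' b (rho j)) ((T ^^ j) b)"])
      finally show "(\<Sum>i<P. zsmult (d' b i) ((T ^^ pi i) b)) = (\<Sum>j<P. zsmult (d' b (rho j)) ((T ^^ j) b))" .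
    qed
    finally show ?thesis .
  qed
  define e where "e b j = d' b (rho j) - d' b j - int p ^ (m - 1) * c' b j" for b j
  have "(\<Sum>b\<in>B2. \<Sum>j<P. zsmult (e b j) ((T ^^ j) b)) =
        (T ^^ (p ^ s)) y - y - zsmult (int p ^ (m - 1)) z"
    unfolding e_def
    apply (subst sy, subst y2, subst z2)
    by (simp add: zsmult_diff_left zsmult_mult sum_subtractf zsmult_sum_right)
  also have "\<dots> = 0" using eq by simp
  finally have esum: "(\<Sum>b\<in>B2. \<Sum>j<P. zsmult (e b j) ((T ^^ j) b)) = 0" .
  have edvd: "\<forall>b\<in>B2. \<forall>j<P. int p ^ m dvd e b j"
    using indep esum fB2 by blast
  have coef: "int p dvd (\<Sum>i\<in>K r. c b i)" if b: "b \<in> B0" for b r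
  proof -
    have bB2: "b \<in> B2" using b by (simp add: B2_def)
    have "int p ^ m dvd (\<Sum>j\<in>K r. e b j)"
      using edvd bB2 by (intro dvd_sum) (auto simp: K_def)
    moreover have "(\<Sum>j\<in>K r. d' b (rho j)) = (\<Sum>j\<in>K r. d' b j)"
      by (rule sum.reindex_bij_betw[OF bijK])
    ultimately have "int p ^ m dvd - (int p ^ (m - 1) * (\<Sum>j\<in>K r. c b j))"
      using b by (simp add: e_def c'_def sum_subtractf sum_distrib_left)
    then have "int p ^ (m - 1) * int p dvd int p ^ (m - 1) * (\<Sum>j\<in>K r. c b j)"
      using m by (simp add: power_eq_if[of "int p" m] dvd_minus_iff mult.commute)
    then show ?thesis using p by (simp add: dvd_mult_cancel_left)
  qed
  have "z = (\<Sum>b\<in>B0. \<Sum>i<P. zsmult (c b i) ((T ^^ i) b) - zsmult (c b i) ((T ^^ (i mod g)) b))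
          + (\<Sum>b\<in>B0. \<Sum>i<P. zsmult (c b i) ((T ^^ (i mod g)) b))"
    unfolding zrep by (simp add: sum_subtractf)
  moreover have "(\<Sum>b\<in>B0. \<Sum>i<P. zsmult (c b i) ((T ^^ i) b) - zsmult (c b i) ((T ^^ (i mod g)) b))
      \<in> Dset T p s"
    using B0 Dmod by (intro D_sum[OF hT]) (auto simp flip: zsmult_diff_right intro!: D_zsmult[OF hT])
  moreover have "(\<Sum>b\<in>B0. \<Sum>i<P. zsmult (c b i) ((T ^^ (i mod g)) b)) \<in> Dset T p s"
  proof (rule D_sum[OF hT])
    fix b assume b: "b \<in> B0"
    have "(\<Sum>i<P. zsmult (c b i) ((T ^^ (i mod g)) b)) =
          (\<Sum>r<g. \<Sum>i\<in>K r. zsmult (c b i) ((T ^^ (i mod g)) b))"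
      unfolding K_def using g0 by (intro sum.group[symmetric]) auto
    also have "\<dots> = (\<Sum>r<g. zsmult (\<Sum>i\<in>K r. c b i) ((T ^^ r) b))"
      by (intro sum.cong refl) (simp add: K_def zsmult_sum_left)
    finally have eqb: "(\<Sum>i<P. zsmult (c b i) ((T ^^ (i mod g)) b)) =
          (\<Sum>r<g. zsmult (\<Sum>i\<in>K r. c b i) ((T ^^ r) b))" .
    show "(\<Sum>i<P. zsmult (c b i) ((T ^^ (i mod g)) b)) \<in> Dset T p s"
      unfolding eqb
    proof (rule D_sum[OF hT])
      fix r
      obtain u where u: "(\<Sum>i\<in>K r. c b i) = int p * u" using coef[OF b] by blast
      show "zsmult (\<Sum>i\<in>K r. c b i) ((T ^^ r) b) \<in> Dset T p s"
        unfolding u zsmult_mult by (rule D_p[OF hT])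
    qed
  qed
  ultimately show ?thesis using D_add[OF hT] by simp
qed


lemma cyc_add:
  assumes "x \<in> cyclic_submodule T w0" "y \<in> cyclic_submodule T w0"
  shows "x + y \<in> cyclic_submodule T w0"
proof -
  from assms(1) obtain c1 M1 where x: "x = (\<Sum>i<M1. zsmult (c1 i) ((T ^^ i) w0))"
    unfolding cyclic_submodule_def by blast
  from assms(2) obtain c2 M2 where y: "y = (\<Sum>i<M2. zsmult (c2 i) ((T ^^ i) w0))"
    unfolding cyclic_submodule_def by blast
  define M where "M = max M1 M2"
  define c1' where "c1' i = (if i < M1 then c1 i else 0)" for i
  define c2' where "c2' i = (if i < M2 then c2 i else 0)" for i
  have x': "x = (\<Sum>i<M. zsmult (c1' i) ((T ^^ i) w0))"
    unfolding x by (rule sum.mono_neutral_cong_left) (auto simp: M_def c1'_def)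
  have y': "y = (\<Sum>i<M. zsmult (c2' i) ((T ^^ i) w0))"
    unfolding y by (rule sum.mono_neutral_cong_left) (auto simp: M_def c2'_def)
  have "x + y = (\<Sum>i<M. zsmult (c1' i + c2' i) ((T ^^ i) w0))"
    unfolding x' y' by (simp add: zsmult_add_left sum.distrib)
  then show ?thesis unfolding cyclic_submodule_def
    by (intro CollectI exI[of _ "\<lambda>i. c1' i + c2' i"] exI[of _ M]) simp
qed

lemma cyc_zs:
  assumes "x \<in> cyclic_submodule T w0"
  shows "zsmult k x \<in> cyclic_submodule T w0"
proof -
  from assms(1) obtain c1 M1 where x: "x = (\<Sum>i<M1. zsmult (c1 i) ((T ^^ i) w0))"
    unfolding cyclic_submodule_def by blast
  have "zsmult k x = (\<Sum>i<M1. zsmult (k * c1 i) ((T ^^ i) w0))"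
    unfolding x by (simp add: zsmult_sum_right zsmult_mult)
  then show ?thesis unfolding cyclic_submodule_def
    by (intro CollectI exI[of _ "\<lambda>i. k * c1 i"] exI[of _ M1]) simp
qed

lemma cyc_T:
  assumes hT: "addh T" and "x \<in> cyclic_submodule T w0"
  shows "T x \<in> cyclic_submodule T w0"
proof -
  from assms(2) obtain c1 M1 where x: "x = (\<Sum>i<M1. zsmult (c1 i) ((T ^^ i) w0))"
    unfolding cyclic_submodule_def by blast
  define c where "c i = (if i = 0 then 0 else c1 (i - 1))" for i
  have "T x = (\<Sum>i<M1. zsmult (c1 i) ((T ^^ Suc i) w0))"
    unfolding x by (simp add: addh_sum[OF hT] addh_zsmult[OF hT])
  also have "\<dots> = (\<Sum>i<Suc M1. zsmult (c i) ((T ^^ i) w0))"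
    by (simp only: sum.lessThan_Suc_shift) (simp add: c_def)
  finally show ?thesis unfolding cyclic_submodule_def
    by (intro CollectI exI[of _ c] exI[of _ "Suc M1"]) simp
qed

lemma cyc_funpow:
  assumes hT: "addh T" and "x \<in> cyclic_submodule T w0"
  shows "(T ^^ n) x \<in> cyclic_submodule T w0"
  by (induction n) (auto simp: assms cyc_T)

lemma cyc_diff:
  assumes "x \<in> cyclic_submodule T w0" "y \<in> cyclic_submodule T w0"
  shows "x - y \<in> cyclic_submodule T w0"
proof -
  have "x - y = x + zsmult (-1) y" by (simp add: zsmult_minus_left)
  then show ?thesis using cyc_add[OF assms(1) cyc_zs[OF assms(2)]] by (simp only:)
qed

theorem corollary4p3:
  fixes p n m h :: nat
    and T :: "'a::ab_group_add \<Rightarrow> 'a"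
    and Wk :: "'k \<Rightarrow> 'a set"
  assumes "prime p"
    and "m \<ge> 2"
    and "h \<le> n"
    and "RmH_module p m h T"
    and "internal_direct_sum Wk"
    and "\<forall>k. \<exists>w0. Wk k = cyclic_submodule T w0"
    and "\<forall>k. \<exists>s\<le>h. free_quotient_module p m s T (Wk k)"
  shows "\<not> propP p m T"
proof
  assume "propP p m T"
  then obtain s y z where zD: "z \<notin> Dset T p s"
    and eq: "(T ^^ (p ^ s)) y - y = zsmult (int p ^ (m - 1)) z"
    unfolding propP_def Let_def Dset_def by blast
  have hT: "addh T" using assms(4) unfolding RmH_module_def addh_def by blast
  have hTn: "\<And>n. addh (T ^^ n)" using addh_funpow hT by blast
  have p1: "p > 1" using assms(1) prime_gt_1_nat by blast
  have m1: "m \<ge> 1" using assms(2) by simp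
  have clT: "(T ^^ j) x \<in> Wk k" if "x \<in> Wk k" for x k j
    using assms(6) cyc_funpow[OF hT] that by metis
  have clD: "x - y \<in> Wk k" if "x \<in> Wk k" "y \<in> Wk k" for x y k
    using assms(6) cyc_diff that by metis
  have clZ: "zsmult j x \<in> Wk k" if "x \<in> Wk k" for x k j
    using assms(6) cyc_zs that by metis
  have ds1: "\<forall>w. \<exists>f. finite {k. f k \<noteq> 0} \<and> (\<forall>k. f k \<in> Wk k) \<and> w = sum f {k. f k \<noteq> 0}"
   and ds2: "\<And>f. finite {k. f k \<noteq> 0} \<Longrightarrow> (\<forall>k. f k \<in> Wk k) \<Longrightarrow> sum f {k. f k \<noteq> 0} = 0
          \<Longrightarrow> (\<forall>k. f k = 0)"
    using assms(5) unfolding internal_direct_sum_def by blast+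
  from ds1 obtain fy where fy: "finite {k. fy k \<noteq> 0}" "\<forall>k. fy k \<in> Wk k"
    "y = sum fy {k. fy k \<noteq> 0}" by blast
  from ds1 obtain fz where fz: "finite {k. fz k \<noteq> 0}" "\<forall>k. fz k \<in> Wk k"
    "z = sum fz {k. fz k \<noteq> 0}" by blast
  define F where "F = {k. fy k \<noteq> 0} \<union> {k. fz k \<noteq> 0}"
  have fF: "finite F" using fy fz by (simp add: F_def)
  define gk where "gk k = (T ^^ (p ^ s)) (fy k) - fy k - zsmult (int p ^ (m - 1)) (fz k)" for k
  have yF: "y = sum fy F"
    unfolding fy(3) by (rule sum.mono_neutral_left) (auto simp: fF F_def fy(1) fz(1))
  have zF: "z = sum fz F"
    unfolding fz(3) by (rule sum.mono_neutral_left) (auto simp: fF F_def fy(1) fz(1))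
  have "sum gk F = sum (\<lambda>k. (T ^^ (p ^ s)) (fy k)) F - sum fy F - zsmult (int p ^ (m - 1)) (sum fz F)"
    by (simp add: gk_def sum_subtractf zsmult_sum_right)
  also have "\<dots> = (T ^^ (p ^ s)) y - y - zsmult (int p ^ (m - 1)) z"
    by (simp add: yF zF addh_sum[OF hTn])
  finally have sg: "sum gk F = 0" using eq by simp
  have gout: "gk k = 0" if "k \<notin> F" for k
    using that by (simp add: gk_def F_def addh_0[OF hTn])
  have sub: "{k. gk k \<noteq> 0} \<subseteq> F" using gout by blast
  have "sum gk {k. gk k \<noteq> 0} = sum gk F"
    by (rule sum.mono_neutral_left[OF fF sub]) auto
  then have "sum gk {k. gk k \<noteq> 0} = 0" using sg by simp
  moreover have "\<forall>k. gk k \<in> Wk k"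
    using fy(2) fz(2) clT clD clZ by (simp add: gk_def)
  moreover have "finite {k. gk k \<noteq> 0}" using finite_subset[OF sub fF] .
  ultimately have g0: "\<forall>k. gk k = 0" using ds2 by blast
  have "fz k \<in> Dset T p s" for k
  proof -
    obtain t where "free_quotient_module p m t T (Wk k)" using assms(7) by blast
    moreover have "(T ^^ (p ^ s)) (fy k) - fy k = zsmult (int p ^ (m - 1)) (fz k)"
      using g0 by (simp add: gk_def)
    ultimately show ?thesis
      using component[OF hT p1 m1] fy(2) fz(2) by blast
  qed
  then have "z \<in> Dset T p s" unfolding fz(3) by (intro D_sum[OF hT])
  then show False using zD by simp
qed


end
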